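(* Let $\mathcal{H}\cong\mathbb{C}^n$, let $\gamma>0$, and let $\mathcal{F}:\mathcal{D}(\mathcal{H})\to\mathcal{B}(\mathcal{H})$ be continuous and satisfy $$0\le\langle x,\mathcal{F}(x)-\mathcal{F}(y)\rangle\le\gamma\, S(x\,\|\,y)\qquad\text{for all }x,y\in\operatorname{relint}\mathcal{D}(\mathcal{H}).$$ Consider the quantum Blahut-Arimoto iterates, started from $x^0\in\operatorname{relint}\mathcal{D}(\mathcal{H})$, $$y^{k+1}=x^k,\qquad x^{k+1}=\frac{\exp\big(\log(y^{k+1})-\mathcal{F}(y^{k+1})/\gamma\big)}{\operatorname{tr}\big[\exp\big(\log(y^{k+1})-\mathcal{F}(y^{k+1})/\gamma\big)\big]},$$ and let $f(x)=\langle x,\mathcal{F}(x)\rangle$ on $\mathcal{D}(\mathcal{H})$. Then these iterates are exactly the mirror descent iterates for minimizing $f$ over $\mathcal{C}=\mathcal{D}(\mathcal{H})$ with kernel $\varphi=-S$ and constant step size $t_k=1/\gamma$, and moreover: (a) $f(x)=\langle x,\nabla f(x)\rangle$ and $\nabla f(x)=\mathcal{F}(x)$ for all $x\in\operatorname{relint}\mathcal{D}(\mathcal{H})$; (b) $f$ is $\gamma$-smooth relative to $-S$ on $\mathcal{D}(\mathcal{H})$. If additionally there is $a>0$ with $\langle x,\mathcal{F}(x)-\mathcal{F}(y)\rangle\ge a\,S(x\,\|\,y)$ for all $x,y\in\operatorname{relint}\mathcal{D}(\mathcal{H})$, then $f$ is also $a$-strongly convex relative to $-S$ on $\mathcal{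D}(\mathcal{H})$.
   Context: $\mathcal{B}(\mathcal{H})$ is the real vector space of self-adjoint operators on $\mathcal{H}$ with inner product $\langle X,Y\rangle=\operatorname{tr}[XY]$; $\mathcal{D}(\mathcal{H})=\{\rho\succeq0:\operatorname{tr}\rho=1\}$ is the set of density matrices, whose relative interior consists of the positive definite density matrices. $S(\rho)=-\operatorname{tr}[\rho\log\rho]$ is the von Neumann entropy and $S(\rho\,\|\,\sigma)=\operatorname{tr}[\rho(\log\rho-\log\sigma)]$ the quantum relative entropy. For a Legendre kernel $\varphi$ (proper, lsc, strictly convex, essentially smooth) with Bregman divergence $D_\varphi(x\,\|\,y)=\varphi(x)-\varphi(y)-\langle\nabla\varphi(y),x-y\rangle$, the mirror descent iterates for minimizing a differentiable $f$ over a convex set $\mathcal{C}\subseteq\operatorname{dom}\varphi$ with step sizes $t_k>0$ are $x^{k+1}=\arg\min_{x\in\mathcal{C}}\{\langle\nabla f(x^k),x\rangle+\frac1{t_k}D_\varphi(x\,\|\,x^k)\}$. For $\varphi=-S$ on positive semidefinite matrices, $D_\varphi(\rho\,\|\,\sigma)=S(\rho\,\|\,\sigma)-\operatorname{tr}[\rho-\sigma]$. $f$ is $L$-smooth (resp. $\mu$-strongly convex) relative to $\varphi$ on $\mathcal{C}$ if $L\varphi-f$ (resp. $f-\mu\varphi$) is convex on $\operatorname{relint}\mathcal{C}$. *)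

theory Defs
  imports "HOL-Analysis.Analysis"
begin

text \<open>Operators on H = C^n are modelled as complex n x n matrices of type
  complex^'n^'n with 'n a finite type (n = CARD('n)).\<close>

definition cadj :: "complex^'n^'n \<Rightarrow> complex^'n^'n" where
  "cadj A = (\<chi> i j. cnj (A $ j $ i))"

definition hermitian :: "complex^'n^'n \<Rightarrow> bool" where
  "hermitian A \<longleftrightarrow> cadj A = A"

definition unitary :: "complex^'n^'n \<Rightarrow> bool" where
  "unitary U \<longleftrightarrow> U ** cadj U = mat 1 \<and> cadj U ** U = mat 1"

definition rdiag :: "('n \<Rightarrow> real) \<Rightarrow> complex^'n^'n" where
  "rdiag d = (\<chi> i j. if i = j then complex_of_real (d i) else 0)"

definition qform :: "complex^'n^'n \<Rightarrow> complex^'n \<Rightarrow> complex" where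
  "qform A v = (\<Sum>i\<in>UNIV. cnj (v $ i) * (A *v v) $ i)"

definition psd :: "complex^'n^'n \<Rightarrow> bool" where
  "psd A \<longleftrightarrow> hermitian A \<and> (\<forall>v. 0 \<le> Re (qform A v))"

definition pd :: "complex^'n^'n \<Rightarrow> bool" where
  "pd A \<longleftrightarrow> hermitian A \<and> (\<forall>v. v \<noteq> 0 \<longrightarrow> 0 < Re (qform A v))"

text \<open>Density matrices D(H) and their relative interior (positive definite ones).\<close>
definition density :: "(complex^'n^'n) set" where
  "density = {A. psd A \<and> trace A = 1}"

definition density_ri :: "(complex^'n^'n) set" where
  "density_ri = {A. pd A \<and> trace A = 1}"

definition hs_inner :: "complex^'n^'n \<Rightarrow> complex^'n^'n \<Rightarrow> real" where
  "hs_inner X Y = Re (trace (X ** Y))"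

definition matfun :: "(real \<Rightarrow> real) \<Rightarrow> complex^'n^'n \<Rightarrow> complex^'n^'n" where
  "matfun g A = (SOME M. \<exists>U d. unitary U \<and> A = U ** rdiag d ** cadj U
                              \<and> M = U ** rdiag (g \<circ> d) ** cadj U)"

definition mexp :: "complex^'n^'n \<Rightarrow> complex^'n^'n" where
  "mexp A = matfun exp A"

definition mlog :: "complex^'n^'n \<Rightarrow> complex^'n^'n" where
  "mlog A = matfun ln A"

text \<open>tr[rho log rho], with the convention 0 log 0 = 0; this is -S(rho), i.e. the kernel phi.\<close>
definition negentropy :: "complex^'n^'n \<Rightarrow> real" where
  "negentropy \<rho> = Re (trace (matfun (\<lambda>t. t * ln t) \<rho>))"

definition vn_entropy :: "complex^'n^'n \<Rightarrow> real" where
  "vn_entropy \<rho> = - negentropy \<rho>"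

definition rel_entropy :: "complex^'n^'n \<Rightarrow> complex^'n^'n \<Rightarrow> real" where
  "rel_entropy \<rho> \<sigma> = negentropy \<rho> - Re (trace (\<rho> ** mlog \<sigma>))"

definition bregman_negent :: "complex^'n^'n \<Rightarrow> complex^'n^'n \<Rightarrow> real" where
  "bregman_negent \<rho> \<sigma> = rel_entropy \<rho> \<sigma> - Re (trace (\<rho> - \<sigma>))"

definition qba_step :: "(complex^'n^'n \<Rightarrow> complex^'n^'n) \<Rightarrow> real \<Rightarrow> complex^'n^'n \<Rightarrow> complex^'n^'n" where
  "qba_step F \<gamma> y =
     (let E = mexp (mlog y - (1 / \<gamma>) *\<^sub>R F y) in (1 / Re (trace E)) *\<^sub>R E)"

primrec qba_iter :: "(complex^'n^'n \<Rightarrow> complex^'n^'n) \<Rightarrow> real \<Rightarrow> complex^'n^'n \<Rightarrow> nat \<Rightarrow> complex^'n^'n" where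
  "qba_iter F \<gamma> x0 0 = x0"
| "qba_iter F \<gamma> x0 (Suc k) = qba_step F \<gamma> (qba_iter F \<gamma> x0 k)"

end

theory Submission
  imports Defs
begin

lemma rdiag_right: "(A ** rdiag d) $ i $ j = A $ i $ j * complex_of_real (d j)"
proof -
  have "(A ** rdiag d) $ i $ j = (\<Sum>k\<in>UNIV. if k = j then A $ i $ k * complex_of_real (d k) else 0)"
    unfolding matrix_matrix_mult_def rdiag_def vec_lambda_beta by (rule sum.cong) auto
  then show ?thesis by simp
qed

lemma rdiag_left: "(rdiag d ** A) $ i $ j = complex_of_real (d i) * A $ i $ j"
proof -
  have "(rdiag d ** A) $ i $ j = (\<Sum>k\<in>UNIV. if i = k then complex_of_real (d k) * A $ k $ j else 0)"
    unfolding matrix_matrix_mult_def rdiag_def vec_lambda_beta by (rule sum.cong) auto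
  then show ?thesis by simp
qed

lemma cadj_cadj[simp]: "cadj (cadj A) = A"
  by (simp add: cadj_def vec_eq_iff)

lemma cadj_mult: "cadj (A ** B) = cadj B ** cadj A"
  by (simp add: cadj_def vec_eq_iff matrix_matrix_mult_def mult.commute)

lemma cadj_add: "cadj (A + B) = cadj A + cadj B"
  by (simp add: cadj_def vec_eq_iff)

lemma cadj_diff: "cadj (A - B) = cadj A - cadj B"
  by (simp add: cadj_def vec_eq_iff)

lemma cadj_scaleR: "cadj (c *\<^sub>R A) = c *\<^sub>R cadj A"
  by (simp add: cadj_def vec_eq_iff)

lemma cadj_mat[simp]: "cadj (mat 1) = mat 1"
  by (simp add: cadj_def vec_eq_iff mat_def)

lemma cadj_rdiag[simp]: "cadj (rdiag d) = rdiag d"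
  by (simp add: cadj_def vec_eq_iff rdiag_def)

lemma trace_cadj: "trace (cadj A) = cnj (trace A)"
  by (simp add: cadj_def trace_def)

lemma rdiag_mult: "rdiag a ** rdiag b = rdiag (\<lambda>i. a i * b i)"
  by (simp add: vec_eq_iff rdiag_left) (simp add: rdiag_def)

lemma trace_rdiag: "trace (rdiag d) = complex_of_real (\<Sum>i\<in>UNIV. d i)"
  by (simp add: trace_def rdiag_def)

lemma unitary_cadj: "unitary U \<Longrightarrow> unitary (cadj U)"
  by (simp add: unitary_def)

lemma unitary_mult: "unitary U \<Longrightarrow> unitary V \<Longrightarrow> unitary (U ** V)"
  unfolding unitary_def cadj_mult
  by (metis matrix_mul_assoc matrix_mul_rid)

lemma hermitian_conj: "hermitian (U ** rdiag d ** cadj U)"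
  unfolding hermitian_def cadj_mult by (simp add: matrix_mul_assoc)

lemma diag_commute:
  assumes "W ** rdiag d = rdiag e ** W"
  shows "W ** rdiag (g \<circ> d) = rdiag (g \<circ> e) ** W"
proof -
  have "W $ i $ j * complex_of_real (g (d j)) = complex_of_real (g (e i)) * W $ i $ j" for i j
  proof -
    have "W $ i $ j * complex_of_real (d j) = complex_of_real (e i) * W $ i $ j"
      using arg_cong[OF assms, of "\<lambda>M. M $ i $ j"] by (simp add: rdiag_right rdiag_left)
    then have "W $ i $ j = 0 \<or> d j = e i" by auto
    then show ?thesis by auto
  qed
  then show ?thesis by (simp add: vec_eq_iff rdiag_right rdiag_left)
qed

lemma fc_unique:
  assumes U: "unitary U" and V: "unitary V"
    and eq: "U ** rdiag d ** cadj U = V ** rdiag e ** cadj V"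
  shows "U ** rdiag (g \<circ> d) ** cadj U = V ** rdiag (g \<circ> e) ** cadj V"
proof -
  define W where "W = cadj V ** U"
  have UU: "cadj U ** U = mat 1" "U ** cadj U = mat 1" using U by (auto simp: unitary_def)
  have VV: "cadj V ** V = mat 1" "V ** cadj V = mat 1" using V by (auto simp: unitary_def)
  have "W ** rdiag d = cadj V ** (U ** rdiag d ** cadj U) ** U"
    by (metis W_def matrix_mul_assoc UU(1) matrix_mul_rid)
  also have "\<dots> = rdiag e ** W"
    by (simp add: eq W_def matrix_mul_assoc VV)
  finally have "W ** rdiag (g \<circ> d) = rdiag (g \<circ> e) ** W" by (rule diag_commute)
  have UVW: "U = V ** W" by (simp add: W_def matrix_mul_assoc VV)
  have "U ** rdiag (g \<circ> d) ** cadj U = V ** (W ** rdiag (g \<circ> d)) ** cadj U"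
    by (simp add: UVW matrix_mul_assoc)
  also have "\<dots> = V ** rdiag (g \<circ> e) ** (W ** cadj U)"
    using \<open>W ** rdiag (g \<circ> d) = rdiag (g \<circ> e) ** W\<close> by (simp add: matrix_mul_assoc)
  also have "W ** cadj U = cadj V"
    by (simp add: W_def matrix_mul_assoc[symmetric] UU)
  finally show ?thesis .
qed

lemma matfun_eq:
  assumes U: "unitary U" and A: "A = U ** rdiag d ** cadj U"
  shows "matfun g A = U ** rdiag (g \<circ> d) ** cadj U"
proof -
  have ex: "\<exists>M. \<exists>U d. unitary U \<and> A = U ** rdiag d ** cadj U \<and> M = U ** rdiag (g \<circ> d) ** cadj U"
    using U A by blast
  from someI_ex[OF ex] obtain V e where V: "unitary V" "A = V ** rdiag e ** cadj V"
    and M: "matfun g A = V ** rdiag (g \<circ> e) ** cadj V"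
    unfolding matfun_def by blast
  show ?thesis using fc_unique[OF V(1) U, of e d g] V(2) A M by simp
qed

definition cinner :: "complex^'n \<Rightarrow> complex^'n \<Rightarrow> complex" where
  "cinner x y = (\<Sum>i\<in>UNIV. cnj (x $ i) * y $ i)"

lemma cinner_add_right: "cinner x (y + z) = cinner x y + cinner x z"
  by (simp add: cinner_def distrib_left sum.distrib)
lemma cinner_add_left: "cinner (x + y) z = cinner x z + cinner y z"
  by (simp add: cinner_def distrib_right sum.distrib)
lemma cinner_diff_right: "cinner x (y - z) = cinner x y - cinner x z"
  by (simp add: cinner_def right_diff_distrib sum_subtractf)
lemma cinner_diff_left: "cinner (x - y) z = cinner x z - cinner y z"
  by (simp add: cinner_def left_diff_distrib sum_subtractf)
lemma vec_scaleR_nth: "((c::real) *\<^sub>R (y::complex^'n)) $ i = complex_of_real c * y $ i"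
  by (simp only: vector_scaleR_component) (simp add: scaleR_conv_of_real)

lemma cinner_scaleR_right: "cinner x (c *\<^sub>R y) = of_real c * cinner x y"
  by (simp add: cinner_def sum_distrib_left vec_scaleR_nth mult_ac) (simp add: scaleR_conv_of_real)
lemma cinner_scaleR_left: "cinner (c *\<^sub>R x) y = of_real c * cinner x y"
  by (simp add: cinner_def sum_distrib_left vec_scaleR_nth mult_ac) (simp add: scaleR_conv_of_real)
lemma cinner_smult_right: "cinner x (c *s y) = c * cinner x y"
  by (simp add: cinner_def sum_distrib_left mult_ac)
lemma cinner_smult_left: "cinner (c *s x) y = cnj c * cinner x y"
  by (simp add: cinner_def sum_distrib_left mult_ac)
lemma cinner_cnj: "cnj (cinner x y) = cinner y x"
  by (simp add: cinner_def mult.commute)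
lemma cinner_zero_right[simp]: "cinner x 0 = 0"
  by (simp add: cinner_def)

lemma inner_cinner: "inner x y = Re (cinner x y)"
  by (simp add: inner_vec_def cinner_def inner_complex_def Re_sum)

lemma cinner_self_real: "cinner x x = of_real ((norm x)^2)"
proof -
  have "cinner x x = (\<Sum>i\<in>UNIV. of_real ((cmod (x $ i))^2))"
    unfolding cinner_def
  proof (intro sum.cong refl)
    fix i show "cnj (x $ i) * x $ i = of_real ((cmod (x $ i))^2)"
      using complex_norm_square[of "x $ i"] by (simp add: mult.commute)
  qed
  also have "\<dots> = of_real (\<Sum>i\<in>UNIV. (cmod (x $ i))^2)" by simp
  also have "(\<Sum>i\<in>UNIV. (cmod (x $ i))^2) = (norm x)^2"
    by (simp add: norm_vec_def L2_set_def sum_nonneg)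
  finally show ?thesis .
qed

lemma cinner_adj: "cinner x (A *v y) = cinner (cadj A *v x) y"
  unfolding cinner_def cadj_def matrix_vector_mult_def
  by (simp add: sum_distrib_left sum_distrib_right mult_ac) (rule sum.swap)

lemma cinner_herm: "hermitian A \<Longrightarrow> cinner x (A *v y) = cinner (A *v x) y"
  by (simp add: hermitian_def cinner_adj)

lemma qform_cinner: "qform A v = cinner v (A *v v)"
  by (simp add: qform_def cinner_def)

lemma qform_real: "hermitian A \<Longrightarrow> qform A v = of_real (Re (qform A v))"
proof -
  assume h: "hermitian A"
  have "cnj (qform A v) = qform A v"
    unfolding qform_cinner cinner_cnj using cinner_herm[OF h, of v v] by simp
  then show ?thesis by (metis Reals_cnj_iff complex_is_Real_iff of_real_Re)
qed

lemma cinner_orth_iff: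
  "cinner x y = 0 \<longleftrightarrow> inner x y = 0 \<and> inner (\<i> *s x) y = 0"
proof -
  have "inner (\<i> *s x) y = Im (cinner x y)"
    by (simp add: inner_cinner cinner_smult_left)
  then show ?thesis by (simp add: inner_cinner complex_eq_iff)
qed

lemma cont_cinner: "continuous_on S (\<lambda>v. cinner a v)"
  unfolding cinner_def by (intro continuous_intros)

lemma cont_cinner_left: "continuous_on S (\<lambda>v. cinner v a)"
  unfolding cinner_def by (intro continuous_intros)

lemma cont_mv: "continuous_on S (\<lambda>v. (A::complex^'n^'n) *v v)"
  by (rule matrix_vector_mult_linear_continuous_on)

lemma cont_qform: "continuous_on S (\<lambda>v. Re (qform A v))"
  unfolding qform_def matrix_vector_mult_def by (intro continuous_intros)

lemma mv_scaleR: "(A::complex^'n^'n) *v (c *\<^sub>R x) = c *\<^sub>R (A *v x)"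
  by (simp add: vec_eq_iff matrix_vector_mult_def scaleR_sum_right)

lemma mv_smult: "(A::complex^'n^'n) *v (c *s x) = c *s (A *v x)"
  by (simp add: vec_eq_iff matrix_vector_mult_def sum_distrib_left mult_ac)

lemma qform_scaleR: "qform A (c *\<^sub>R x) = of_real (c^2) * qform A x"
  by (simp add: qform_cinner mv_scaleR cinner_scaleR_left cinner_scaleR_right power2_eq_square)

lemma eig_step:
  fixes A :: "complex^'n^'n" and u :: "'n \<Rightarrow> complex^'n"
  assumes h: "hermitian A" and fin: "finite I" and cardI: "card I < CARD('n)"
    and orth: "\<forall>i\<in>I. \<forall>j\<in>I. cinner (u i) (u j) = (if i = j then 1 else 0)"
    and eig: "\<forall>i\<in>I. A *v u i = complex_of_real (l i) *s u i"
  shows "\<exists>v lam. cinner v v = 1 \<and> (\<forall>i\<in>I. cinner (u i) v = 0) \<and> A *v v = complex_of_real lam *s v"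
proof -
  define W where "W = (\<Inter>i\<in>I. {v. cinner (u i) v = 0})"
  have W_add: "x \<in> W \<Longrightarrow> y \<in> W \<Longrightarrow> x + y \<in> W" for x y
    by (simp add: W_def cinner_add_right)
  have W_diff: "x \<in> W \<Longrightarrow> y \<in> W \<Longrightarrow> x - y \<in> W" for x y
    by (simp add: W_def cinner_diff_right)
  have W_scaleR: "x \<in> W \<Longrightarrow> c *\<^sub>R x \<in> W" for x c
    by (simp add: W_def cinner_scaleR_right)
  have W_smult: "x \<in> W \<Longrightarrow> c *s x \<in> W" for x c
    by (simp add: W_def cinner_smult_right)
  have W_A: "x \<in> W \<Longrightarrow> A *v x \<in> W" for x
  proof -
    assume x: "x \<in> W"
    { fix i assume i: "i \<in> I"
      have "cinner (u i) (A *v x) = cinner (A *v u i) x" by (rule cinner_herm[OF h])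
      also have "\<dots> = cnj (complex_of_real (l i)) * cinner (u i) x"
        using eig i by (simp add: cinner_smult_left)
      also have "\<dots> = 0" using x i by (simp add: W_def)
      finally have "cinner (u i) (A *v x) = 0" . }
    then show ?thesis by (simp add: W_def)
  qed
  have closedW: "closed W"
    unfolding W_def
    by (intro closed_INT ballI closed_Collect_eq cont_cinner continuous_on_const)
  obtain w where w0: "w \<noteq> 0" and wW: "w \<in> W"
  proof -
    define S0 where "S0 = u ` I \<union> (\<lambda>i. \<i> *s u i) ` I"
    have finS0: "finite S0" using fin by (simp add: S0_def)
    have "card S0 \<le> card (u ` I) + card ((\<lambda>i. \<i> *s u i) ` I)"
      unfolding S0_def by (rule card_Un_le)
    also have "\<dots> \<le> card I + card I" by (intro add_mono card_image_le fin)
    finally have "card S0 \<le> 2 * card I" by simp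
    moreover have "dim S0 \<le> card S0" by (rule dim_le_card'[OF finS0])
    ultimately have "dim S0 < DIM(complex^'n)" using cardI by simp
    then obtain x where x0: "x \<noteq> 0" and xo: "\<And>y. y \<in> span S0 \<Longrightarrow> orthogonal x y"
      using orthogonal_to_subspace_exists[of S0] by blast
    have "x \<in> W"
    proof -
      { fix i assume i: "i \<in> I"
        have "orthogonal x (u i)" "orthogonal x (\<i> *s u i)"
          using i by (auto intro!: xo span_base simp: S0_def)
        then have "cinner (u i) x = 0"
          by (simp add: cinner_orth_iff orthogonal_def inner_commute) }
      then show ?thesis by (simp add: W_def)
    qed
    then show ?thesis using that x0 by blast
  qed
  define K where "K = sphere 0 1 \<inter> W"
  have compK: "compact K" unfolding K_def by (intro compact_Int_closed compact_sphere closedW)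
  have "(1 / norm w) *\<^sub>R w \<in> K" using w0 wW W_scaleR by (simp add: K_def)
  then have Kne: "K \<noteq> {}" by blast
  obtain v where vK: "v \<in> K" and vmax: "\<And>y. y \<in> K \<Longrightarrow> Re (qform A y) \<le> Re (qform A v)"
    using continuous_attains_sup[OF compK Kne cont_qform[of K A]] by blast
  define lam where "lam = Re (qform A v)"
  have vW: "v \<in> W" and nv: "norm v = 1" using vK by (auto simp: K_def)
  have vv: "cinner v v = 1" using nv by (simp add: cinner_self_real)
  define r where "r = A *v v - complex_of_real lam *s v"
  have rW: "r \<in> W" unfolding r_def by (intro W_diff W_A W_smult vW)
  have vr: "cinner v r = 0"
    unfolding r_def cinner_diff_right cinner_smult_right vv
    using qform_real[OF h, of v] by (simp add: lam_def qform_cinner)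
  have rv: "cinner r v = 0" using vr cinner_cnj[of v r] by simp
  have Av: "A *v v = r + complex_of_real lam *s v" by (simp add: r_def)
  have "r = 0"
  proof (rule ccontr)
    assume r0: "r \<noteq> 0"
    define nr where "nr = (norm r)^2"
    have nrpos: "nr > 0" using r0 by (simp add: nr_def)
    have rr: "cinner r r = of_real nr" by (simp add: nr_def cinner_self_real)
    define q where "q = Re (qform A r)"
    have key: "2 * t * nr + t^2 * (q - lam * nr) \<le> 0" if t: "t > 0" for t
    proof -
      define vt where "vt = v + t *\<^sub>R r"
      have vtW: "vt \<in> W" unfolding vt_def by (intro W_add W_scaleR vW rW)
      have vtvt: "cinner vt vt = of_real (1 + t^2 * nr)"
        unfolding vt_def cinner_add_left cinner_add_right cinner_scaleR_left cinner_scaleR_right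
        by (simp add: vv vr rv rr power2_eq_square)
      then have nvt: "(norm vt)^2 = 1 + t^2 * nr" by (metis cinner_self_real of_real_eq_iff)
      have vt0: "norm vt > 0" using nvt nrpos t
        by (metis add_pos_nonneg norm_ge_zero not_less order_le_less power2_less_0 zero_less_one
            zero_power2 mult_nonneg_nonneg zero_le_power2 less_le)
      have c1: "cinner v (A *v r) = of_real nr"
        using cinner_herm[OF h, of v r] by (simp add: Av cinner_add_left cinner_smult_left vr rr)
      have c2: "cinner r (A *v v) = of_real nr"
        by (simp add: Av cinner_add_right cinner_smult_right rv rr)
      have "qform A vt = qform A v + of_real t * cinner v (A *v r) + of_real t * cinner r (A *v v)
              + of_real (t^2) * qform A r"
        unfolding vt_def qform_cinner matrix_vector_right_distrib mv_scaleR
          cinner_add_left cinner_add_right cinner_scaleR_left cinner_scaleR_right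
        by (simp add: power2_eq_square algebra_simps)
      then have Q: "Re (qform A vt) = lam + 2 * t * nr + t^2 * q"
        by (simp add: c1 c2 lam_def q_def)
      define y where "y = (1 / norm vt) *\<^sub>R vt"
      have "y \<in> K" using vt0 vtW W_scaleR by (simp add: K_def y_def)
      then have "Re (qform A y) \<le> lam" using vmax lam_def by blast
      moreover have "Re (qform A y) = Re (qform A vt) / (norm vt)^2"
        by (simp add: y_def qform_scaleR power_divide)
      ultimately have "Re (qform A vt) \<le> lam * (norm vt)^2"
        using vt0 by (simp add: divide_le_eq)
      then show ?thesis using Q nvt by (simp add: algebra_simps)
    qed
    define c where "c = \<bar>q - lam * nr\<bar> + 1"
    have cpos: "c > 0" by (simp add: c_def)
    define t where "t = nr / c"
    have tpos: "t > 0" using nrpos cpos by (simp add: t_def)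
    have tc: "t * c = nr" using cpos by (simp add: t_def)
    have "t * \<bar>q - lam * nr\<bar> \<le> nr" using tc tpos by (simp add: c_def algebra_simps)
    moreover have "t * (q - lam * nr) \<ge> t * (- \<bar>q - lam * nr\<bar>)"
      using tpos by (intro mult_left_mono) auto
    ultimately have "t * (q - lam * nr) \<ge> - nr" by simp
    then have "t * (t * (q - lam * nr)) \<ge> t * (- nr)"
      using tpos by (intro mult_left_mono) auto
    then have "t^2 * (q - lam * nr) \<ge> - (t * nr)"
      by (simp add: power2_eq_square mult.assoc)
    then have "2 * t * nr + t^2 * (q - lam * nr) \<ge> t * nr" by linarith
    moreover have "t * nr > 0" using tpos nrpos by simp
    ultimately show False using key[OF tpos] by (simp add: mult.commute)
  qed
  then have "A *v v = complex_of_real lam *s v" using Av by simp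
  moreover have "\<forall>i\<in>I. cinner (u i) v = 0" using vW by (simp add: W_def)
  ultimately show ?thesis using vv by blast
qed

lemma spectral_set:
  fixes A :: "complex^'n^'n"
  assumes h: "hermitian A" and fin: "finite I"
  shows "\<exists>(u::'n \<Rightarrow> complex^'n) l. (\<forall>i\<in>I. \<forall>j\<in>I. cinner (u i) (u j) = (if i = j then 1 else 0))
           \<and> (\<forall>i\<in>I. A *v u i = complex_of_real (l i) *s u i)"
  using fin
proof (induction I rule: finite_induct)
  case empty
  then show ?case by auto
next
  case (insert j I)
  then obtain u l where orth: "\<forall>i\<in>I. \<forall>j\<in>I. cinner (u i) (u j) = (if i = j then 1 else 0)"
    and eig: "\<forall>i\<in>I. A *v u i = complex_of_real (l i) *s u i" by blast
  have "I \<subset> UNIV" using insert by auto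
  then have "card I < CARD('n)" by (simp add: psubset_card_mono)
  from eig_step[OF h insert(1) this orth eig] obtain v lam where
    vv: "cinner v v = 1" and vo: "\<forall>i\<in>I. cinner (u i) v = 0" and ve: "A *v v = complex_of_real lam *s v"
    by blast
  have vo': "\<forall>i\<in>I. cinner v (u i) = 0" using vo cinner_cnj by (metis complex_cnj_zero)
  define u' where "u' = u(j := v)"
  define l' where "l' = l(j := lam)"
  have "\<forall>i\<in>insert j I. \<forall>k\<in>insert j I. cinner (u' i) (u' k) = (if i = k then 1 else 0)"
    using orth vv vo vo' insert(2) by (auto simp: u'_def)
  moreover have "\<forall>i\<in>insert j I. A *v u' i = complex_of_real (l' i) *s u' i"
    using eig ve insert(2) by (auto simp: u'_def l'_def)
  ultimately show ?case by blast
qed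

theorem spectral:
  fixes A :: "complex^'n^'n"
  assumes h: "hermitian A"
  shows "\<exists>U d. unitary U \<and> A = U ** rdiag d ** cadj U"
proof -
  obtain u :: "'n \<Rightarrow> complex^'n" and l where orth: "\<forall>i j. cinner (u i) (u j) = (if i = j then 1 else 0)"
    and eig: "\<forall>i. A *v u i = complex_of_real (l i) *s u i"
    using spectral_set[OF h, of UNIV] by auto
  define U :: "complex^'n^'n" where "U = (\<chi> r j. u j $ r)"
  have UU: "cadj U ** U = mat 1"
    using orth by (simp add: vec_eq_iff matrix_matrix_mult_def cadj_def cinner_def mat_def U_def)
  then have UU2: "U ** cadj U = mat 1" by (simp add: matrix_left_right_inverse)
  have AU: "A ** U = U ** rdiag l"
  proof -
    have "(A ** U) $ r $ j = (U ** rdiag l) $ r $ j" for r j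
    proof -
      have "(A ** U) $ r $ j = (A *v u j) $ r"
        by (simp add: matrix_matrix_mult_def matrix_vector_mult_def U_def)
      also have "\<dots> = complex_of_real (l j) * u j $ r" using eig by simp
      finally show ?thesis by (simp add: rdiag_right U_def mult.commute)
    qed
    then show ?thesis by (simp add: vec_eq_iff)
  qed
  have "A = A ** (U ** cadj U)" by (simp add: UU2)
  also have "\<dots> = U ** rdiag l ** cadj U" by (simp add: matrix_mul_assoc AU)
  finally show ?thesis using UU UU2 unfolding unitary_def by blast
qed

lemma matrix_diff_ldistrib: "(A::'a::ring_1^'n^'m) ** (B - C) = A ** B - A ** C"
  by (simp add: vec_eq_iff matrix_matrix_mult_def right_diff_distrib sum_subtractf)

lemma matrix_diff_rdistrib: "((A::'a::ring_1^'n^'m) - B) ** C = A ** C - B ** C"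
  by (simp add: vec_eq_iff matrix_matrix_mult_def left_diff_distrib sum_subtractf)

lemma matrix_scaleR_left: "(c *\<^sub>R (A::complex^'n^'m)) ** B = c *\<^sub>R (A ** B)"
  by (simp add: vec_eq_iff matrix_matrix_mult_def scaleR_sum_right)

lemma trace_scaleR: "trace (c *\<^sub>R (A::complex^'n^'n)) = of_real c * trace A"
  by (simp only: trace_def vector_scaleR_component) (simp add: sum_distrib_left scaleR_conv_of_real)

lemma hermitian_diff: "hermitian A \<Longrightarrow> hermitian B \<Longrightarrow> hermitian (A - B)"
  by (simp add: hermitian_def cadj_diff)

lemma hermitian_scaleR: "hermitian A \<Longrightarrow> hermitian (c *\<^sub>R A)"
  by (simp add: hermitian_def cadj_scaleR)

lemma matfun_herm:
  assumes "hermitian A"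
  obtains U d where "unitary U" "A = U ** rdiag d ** cadj U"
    "\<And>g. matfun g A = U ** rdiag (g \<circ> d) ** cadj U"
  using spectral[OF assms] matfun_eq by metis

lemma hermitian_matfun: "hermitian A \<Longrightarrow> hermitian (matfun g A)"
  by (metis matfun_herm hermitian_conj)

lemma trace_conj: "unitary U \<Longrightarrow> trace (U ** rdiag d ** cadj U) = of_real (sum d UNIV)"
  by (metis trace_mul_sym matrix_mul_assoc unitary_def matrix_mul_lid trace_rdiag)

lemma conj_mult: "unitary U \<Longrightarrow>
   (U ** rdiag a ** cadj U) ** (U ** rdiag b ** cadj U) = U ** rdiag (\<lambda>i. a i * b i) ** cadj U"
proof -
  assume U: "unitary U"
  have "(U ** rdiag a ** cadj U) ** (U ** rdiag b ** cadj U) = U ** rdiag a ** (cadj U ** U) ** rdiag b ** cadj U"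
    by (simp add: matrix_mul_assoc)
  also have "\<dots> = U ** (rdiag a ** rdiag b) ** cadj U"
    using U by (simp add: unitary_def matrix_mul_assoc)
  finally show ?thesis by (simp add: rdiag_mult)
qed

lemma conj_scaleR: "c *\<^sub>R (U ** rdiag d ** cadj U) = U ** rdiag (\<lambda>i. c * d i) ** cadj U"
proof -
  have "rdiag (\<lambda>i. c * d i) = c *\<^sub>R rdiag d"
    by (simp add: rdiag_def vec_eq_iff vec_scaleR_nth) (simp add: scaleR_conv_of_real)
  then show ?thesis by (simp add: matrix_scalar_ac matrix_scaleR_left)
qed

lemma conj_shift: "unitary U \<Longrightarrow>
   U ** rdiag (\<lambda>i. d i - c) ** cadj U = U ** rdiag d ** cadj U - c *\<^sub>R mat 1"
proof -
  assume U: "unitary U"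
  have "rdiag (\<lambda>i. d i - c) = rdiag d - c *\<^sub>R mat 1"
    by (simp add: rdiag_def vec_eq_iff vec_scaleR_nth mat_def) (simp add: scaleR_conv_of_real)
  then show ?thesis using U
    by (simp add: matrix_diff_ldistrib matrix_diff_rdistrib matrix_scalar_ac matrix_scaleR_left unitary_def)
qed

lemma rel_entropy_self:
  assumes "hermitian z"
  shows "rel_entropy z z = 0"
proof -
  obtain U d where U: "unitary U" and z: "z = U ** rdiag d ** cadj U"
    and mf: "\<And>g. matfun g z = U ** rdiag (g \<circ> d) ** cadj U"
    using matfun_herm[OF assms] by blast
  have "z ** mlog z = U ** rdiag (\<lambda>i. d i * ln (d i)) ** cadj U"
    by (subst z, simp add: mlog_def mf conj_mult[OF U] o_def)
  moreover have "matfun (\<lambda>t. t * ln t) z = U ** rdiag (\<lambda>i. d i * ln (d i)) ** cadj U"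
    by (simp add: mf o_def)
  ultimately show ?thesis by (simp add: rel_entropy_def negentropy_def)
qed

lemma cns1: "(complex_of_real (cmod z))^2 = z * cnj z"
  using complex_norm_square[of z] by simp
lemma cns2: "(complex_of_real (cmod z))^2 = cnj z * z"
  using complex_norm_square[of z] by (simp add: mult.commute)

lemma ln_eq_minus_one: fixes x :: real assumes "x > 0" "ln x = x - 1" shows "x = 1"
proof -
  have s: "sqrt x > 0" using assms by simp
  have "ln x = 2 * ln (sqrt x)" using assms by (simp add: ln_sqrt)
  also have "\<dots> \<le> 2 * (sqrt x - 1)" using ln_le_minus_one[OF s] by simp
  finally have "x - 1 \<le> 2 * sqrt x - 2" using assms by simp
  moreover have "x = (sqrt x)^2" using assms by simp
  ultimately have "(sqrt x - 1)^2 \<le> 0" by (simp add: power2_eq_square algebra_simps)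
  then have "sqrt x = 1" by simp
  then show ?thesis using assms by simp
qed

lemma plogp_ineq:
  fixes p q :: real assumes p: "p \<ge> 0" and q: "q > 0"
  shows "p * ln p - p * ln q \<ge> p - q"
    and "p * ln p - p * ln q = p - q \<Longrightarrow> p = q"
proof -
  have "p * ln p - p * ln q \<ge> p - q \<and> (p * ln p - p * ln q = p - q \<longrightarrow> p = q)"
  proof (cases "p = 0")
    case True then show ?thesis using q by simp
  next
    case False
    then have p0: "p > 0" using p by simp
    have t: "q / p > 0" using p0 q by simp
    have l: "ln (q / p) = ln q - ln p" using p0 q by (simp add: ln_div)
    have "ln (q / p) \<le> q / p - 1" by (rule ln_le_minus_one[OF t])
    then have "p * ln (q / p) \<le> p * (q / p - 1)" using p0 by (intro mult_left_mono) auto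
    then have i: "p * ln q - p * ln p \<le> q - p" using p0 by (simp add: l algebra_simps)
    moreover
    { assume "p * ln p - p * ln q = p - q"
      then have "p * ln (q / p) = p * (q / p - 1)" using p0 by (simp add: l algebra_simps)
      then have "ln (q / p) = q / p - 1" using p0 by simp
      then have "q / p = 1" using ln_eq_minus_one t by blast
      then have "p = q" using p0 by simp }
    ultimately show ?thesis by linarith
  qed
  then show "p * ln p - p * ln q \<ge> p - q" and "p * ln p - p * ln q = p - q \<Longrightarrow> p = q" by auto
qed

lemma trace_formula:
  "trace (rdiag a ** W ** rdiag b ** cadj W) =
     of_real (\<Sum>i\<in>UNIV. \<Sum>j\<in>UNIV. a i * b j * (cmod (W $ i $ j))^2)"
proof -
  have "(rdiag a ** W ** rdiag b ** cadj W) $ i $ i = of_real (\<Sum>j\<in>UNIV. a i * b j * (cmod (W $ i $ j))^2)" for i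
  proof -
    have "(rdiag a ** W ** rdiag b ** cadj W) $ i $ i
        = (\<Sum>j\<in>UNIV. complex_of_real (a i) * W $ i $ j * complex_of_real (b j) * cnj (W $ i $ j))"
      by (simp add: matrix_matrix_mult_def[of "rdiag a ** W ** rdiag b"] rdiag_right rdiag_left cadj_def)
    also have "\<dots> = (\<Sum>j\<in>UNIV. of_real (a i * b j * (cmod (W $ i $ j))^2))"
    proof (intro sum.cong refl)
      fix j
      have "W $ i $ j * cnj (W $ i $ j) = of_real ((cmod (W $ i $ j))^2)"
        using complex_norm_square[of "W $ i $ j"] by simp
      then show "complex_of_real (a i) * W $ i $ j * complex_of_real (b j) * cnj (W $ i $ j)
          = of_real (a i * b j * (cmod (W $ i $ j))^2)"
        by (simp add: mult_ac)
    qed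
    finally show ?thesis by simp
  qed
  then show ?thesis by (simp add: trace_def)
qed

lemma unitary_rows:
  assumes "unitary W"
  shows "(\<Sum>j\<in>UNIV. (cmod (W $ i $ j))^2) = 1" and "(\<Sum>i\<in>UNIV. (cmod (W $ i $ j))^2) = 1"
proof -
  have a: "(W ** cadj W) $ i $ i = 1" "(cadj W ** W) $ j $ j = 1"
    using assms by (auto simp: unitary_def mat_def)
  have "(W ** cadj W) $ i $ i = of_real (\<Sum>j\<in>UNIV. (cmod (W $ i $ j))^2)"
    by (simp add: matrix_matrix_mult_def cadj_def cns1)
  then show "(\<Sum>j\<in>UNIV. (cmod (W $ i $ j))^2) = 1" using a(1) by (metis of_real_eq_1_iff)
  have "(cadj W ** W) $ j $ j = of_real (\<Sum>i\<in>UNIV. (cmod (W $ i $ j))^2)"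
    by (simp add: matrix_matrix_mult_def cadj_def cns2)
  then show "(\<Sum>i\<in>UNIV. (cmod (W $ i $ j))^2) = 1" using a(2) by (metis of_real_eq_1_iff)
qed

lemma klein:
  fixes x s :: "complex^'n^'n"
  assumes V: "unitary V" and x: "x = V ** rdiag p ** cadj V" and p0: "\<forall>i. p i \<ge> 0"
    and ps: "sum p UNIV = 1"
    and U: "unitary U" and s: "s = U ** rdiag q ** cadj U" and q0: "\<forall>j. q j > 0"
    and qs: "sum q UNIV = 1"
  shows "rel_entropy x s \<ge> 0" and "rel_entropy x s = 0 \<Longrightarrow> x = s"
proof -
  define W where "W = cadj V ** U"
  have VV: "cadj V ** V = mat 1" "V ** cadj V = mat 1" using V by (auto simp: unitary_def)
  have UU: "cadj U ** U = mat 1" "U ** cadj U = mat 1" using U by (auto simp: unitary_def)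
  have Wu: "unitary W" unfolding W_def by (intro unitary_mult unitary_cadj V U)
  define a where "a i j = (cmod (W $ i $ j))^2" for i j
  have a0: "a i j \<ge> 0" for i j by (simp add: a_def)
  have arow: "(\<Sum>j\<in>UNIV. a i j) = 1" for i using unitary_rows(1)[OF Wu] by (simp add: a_def)
  have acol: "(\<Sum>i\<in>UNIV. a i j) = 1" for j using unitary_rows(2)[OF Wu] by (simp add: a_def)
  have neg: "negentropy x = (\<Sum>i\<in>UNIV. p i * ln (p i))"
    using matfun_eq[OF V x, of "\<lambda>t. t * ln t"] trace_conj[OF V]
    by (simp add: negentropy_def o_def)
  have mls: "mlog s = U ** rdiag (ln \<circ> q) ** cadj U"
    using matfun_eq[OF U s] by (simp add: mlog_def)
  have UW: "U = V ** W" by (simp add: W_def matrix_mul_assoc VV)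
  have cU: "cadj U = cadj W ** cadj V" by (simp add: UW cadj_mult)
  have "x ** mlog s = V ** (rdiag p ** W ** rdiag (ln \<circ> q) ** cadj W) ** cadj V"
  proof -
    have "x ** mlog s = V ** rdiag p ** (cadj V ** U) ** rdiag (ln \<circ> q) ** cadj U"
      by (simp add: x mls matrix_mul_assoc)
    then show ?thesis by (simp add: W_def[symmetric] cU matrix_mul_assoc)
  qed
  then have "trace (x ** mlog s) = trace (rdiag p ** W ** rdiag (ln \<circ> q) ** cadj W)"
    by (metis trace_mul_sym matrix_mul_assoc VV(1) matrix_mul_lid)
  then have tr: "Re (trace (x ** mlog s)) = (\<Sum>i\<in>UNIV. \<Sum>j\<in>UNIV. p i * ln (q j) * a i j)"
    by (simp add: trace_formula a_def)
  have negs: "(\<Sum>i\<in>UNIV. p i * ln (p i)) = (\<Sum>i\<in>UNIV. \<Sum>j\<in>UNIV. p i * ln (p i) * a i j)"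
    by (simp add: sum_distrib_left[symmetric] arow)
  have S: "rel_entropy x s = (\<Sum>i\<in>UNIV. \<Sum>j\<in>UNIV. a i j * (p i * ln (p i) - p i * ln (q j)))"
    unfolding rel_entropy_def neg tr negs
    by (simp add: sum_subtractf[symmetric] algebra_simps)
  have T: "(\<Sum>i\<in>UNIV. \<Sum>j\<in>UNIV. a i j * (p i - q j)) = 0"
  proof -
    have "(\<Sum>i\<in>UNIV. \<Sum>j\<in>UNIV. a i j * (p i - q j))
        = (\<Sum>i\<in>UNIV. \<Sum>j\<in>UNIV. a i j * p i) - (\<Sum>i\<in>UNIV. \<Sum>j\<in>UNIV. a i j * q j)"
      by (simp add: sum_subtractf[symmetric] algebra_simps)
    also have "(\<Sum>i\<in>UNIV. \<Sum>j\<in>UNIV. a i j * p i) = 1"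
      by (simp add: sum_distrib_right[symmetric] arow ps)
    also have "(\<Sum>i\<in>UNIV. \<Sum>j\<in>UNIV. a i j * q j) = 1"
      by (subst sum.swap) (simp add: sum_distrib_right[symmetric] acol qs)
    finally show ?thesis by simp
  qed
  define g where "g i j = a i j * ((p i * ln (p i) - p i * ln (q j)) - (p i - q j))" for i j
  have g0: "g i j \<ge> 0" for i j
    unfolding g_def using plogp_ineq(1)[of "p i" "q j"] p0 q0 a0 by simp
  have SG: "rel_entropy x s = (\<Sum>i\<in>UNIV. \<Sum>j\<in>UNIV. g i j)"
  proof -
    have e: "g i j = a i j * (p i * ln (p i) - p i * ln (q j)) - a i j * (p i - q j)" for i j
      unfolding g_def by (rule right_diff_distrib)
    show ?thesis using S T by (simp only: e sum_subtractf)
  qed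
  show "rel_entropy x s \<ge> 0" unfolding SG by (intro sum_nonneg g0)
  assume "rel_entropy x s = 0"
  then have "(\<Sum>i\<in>UNIV. \<Sum>j\<in>UNIV. g i j) = 0" using SG by simp
  then have "\<forall>i. (\<Sum>j\<in>UNIV. g i j) = 0"
    by (subst (asm) sum_nonneg_eq_0_iff) (auto intro: sum_nonneg g0)
  then have gz: "\<forall>i j. g i j = 0"
    by (metis (no_types, lifting) finite UNIV_I g0 sum_nonneg_eq_0_iff)
  have pq: "W $ i $ j = 0 \<or> p i = q j" for i j
  proof (cases "W $ i $ j = 0")
    case False
    then have "a i j \<noteq> 0" by (simp add: a_def)
    then have "p i * ln (p i) - p i * ln (q j) = p i - q j" using gz by (auto simp: g_def)
    then show ?thesis using plogp_ineq(2)[of "p i" "q j"] p0 q0 by simp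
  qed simp
  have WQ: "W ** rdiag q = rdiag p ** W"
    using pq by (auto simp: vec_eq_iff rdiag_right rdiag_left) (metis mult_zero_left)
  have "s = V ** (W ** rdiag q) ** cadj U" by (simp add: s UW matrix_mul_assoc)
  also have "\<dots> = V ** rdiag p ** (W ** cadj U)" by (simp add: WQ matrix_mul_assoc)
  also have "W ** cadj U = cadj V" by (simp add: W_def matrix_mul_assoc[symmetric] UU)
  finally show "x = s" by (simp add: x)
qed

lemma rdiag_mv: "(rdiag p *v w) $ j = complex_of_real (p j) * w $ j"
proof -
  have "(rdiag p *v w) $ j = (\<Sum>k\<in>UNIV. if k = j then complex_of_real (p j) * w $ j else 0)"
    unfolding matrix_vector_mult_def rdiag_def vec_lambda_beta by (rule sum.cong) auto
  then show ?thesis by simp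
qed

lemma conj_qform:
  assumes U: "unitary U"
  shows "qform (U ** rdiag d ** cadj U) v = (let w = cadj U *v v in of_real (\<Sum>j\<in>UNIV. d j * (cmod (w $ j))^2))"
proof -
  define w where "w = cadj U *v v"
  have "(U ** rdiag d ** cadj U) *v v = U *v (rdiag d *v w)"
    by (simp add: w_def matrix_vector_mul_assoc matrix_mul_assoc)
  then have "qform (U ** rdiag d ** cadj U) v = cinner w (rdiag d *v w)"
    by (simp add: qform_cinner cinner_adj w_def)
  also have "\<dots> = of_real (\<Sum>j\<in>UNIV. d j * (cmod (w $ j))^2)"
    by (simp add: cinner_def rdiag_mv cns2 mult_ac)
  finally show ?thesis by (simp add: w_def)
qed

lemma psd_diag_nonneg:
  fixes x :: "complex^'n^'n"
  assumes "psd x" "unitary V" "x = V ** rdiag p ** cadj V"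
  shows "p i \<ge> 0"
proof -
  define e :: "complex^'n" where "e = axis i 1"
  have VV: "cadj V ** V = mat 1" using assms(2) by (simp add: unitary_def)
  have "cadj V *v (V *v e) = e" by (simp add: matrix_vector_mul_assoc VV)
  then have "qform x (V *v e) = of_real (\<Sum>j\<in>UNIV. p j * (cmod (e $ j))^2)"
    using conj_qform[OF assms(2), of p "V *v e"] assms(3) by simp
  also have "(\<Sum>j\<in>UNIV. p j * (cmod (e $ j))^2) = p i"
  proof -
    have "(\<Sum>j\<in>UNIV. p j * (cmod (e $ j))^2) = (\<Sum>j\<in>UNIV. if j = i then p i else 0)"
      by (rule sum.cong) (auto simp: e_def axis_def)
    then show ?thesis by simp
  qed
  finally have "Re (qform x (V *v e)) = p i" by simp
  then show ?thesis using assms(1) by (metis psd_def)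
qed

lemma density_decomp:
  assumes "x \<in> density"
  obtains V p where "unitary V" "x = V ** rdiag p ** cadj V" "\<forall>i. p i \<ge> 0" "sum p UNIV = 1"
proof -
  have psd: "psd x" and tr: "trace x = 1" using assms by (auto simp: density_def)
  then have "hermitian x" by (simp add: psd_def)
  then obtain V p where V: "unitary V" "x = V ** rdiag p ** cadj V" using spectral by blast
  have "\<forall>i. p i \<ge> 0" using psd_diag_nonneg[OF psd V(1) V(2)] by blast
  moreover have "complex_of_real (sum p UNIV) = 1" using tr trace_conj[OF V(1), of p] V(2) by simp
  then have "sum p UNIV = 1" by (metis of_real_eq_1_iff)
  ultimately show ?thesis using that V by blast
qed

lemma conj_ri:
  assumes U: "unitary U" and q0: "\<forall>j. q j > 0" and qs: "sum q UNIV = 1"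
  shows "U ** rdiag q ** cadj U \<in> density_ri"
proof -
  have "0 < Re (qform (U ** rdiag q ** cadj U) v)" if v0: "v \<noteq> 0" for v
  proof -
    define w where "w = cadj U *v v"
    have "U *v w = v" using U by (simp add: w_def matrix_vector_mul_assoc unitary_def)
    then have "w \<noteq> 0" using v0 by auto
    then obtain j where j: "w $ j \<noteq> 0" by (auto simp: vec_eq_iff)
    have "0 < q j * (cmod (w $ j))^2" using j q0 by simp
    also have "\<dots> \<le> (\<Sum>j\<in>UNIV. q j * (cmod (w $ j))^2)"
      by (rule member_le_sum) (use q0 in \<open>auto intro!: mult_nonneg_nonneg simp: less_imp_le\<close>)
    finally show ?thesis using conj_qform[OF U, of q v] by (simp add: w_def Let_def)
  qed
  moreover have "trace (U ** rdiag q ** cadj U) = 1" using trace_conj[OF U] qs by (simp del: of_real_sum)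
  ultimately show ?thesis by (simp add: density_ri_def pd_def hermitian_conj)
qed

lemma ri_sub: "density_ri \<subseteq> density"
proof
  fix x :: "complex^'n^'n" assume "x \<in> density_ri"
  then have "pd x" "trace x = 1" by (auto simp: density_ri_def)
  moreover have "0 \<le> Re (qform x v)" for v
    using \<open>pd x\<close> by (cases "v = 0") (auto simp: pd_def qform_def less_imp_le)
  ultimately show "x \<in> density" by (auto simp: density_def psd_def pd_def)
qed

lemma density_herm: "x \<in> density \<Longrightarrow> hermitian x"
  by (simp add: density_def psd_def)

lemma density_tr: "x \<in> density \<Longrightarrow> Re (trace x) = 1"
  by (simp add: density_def)

lemma gibbs:
  fixes y :: "complex^'n^'n" and F :: "complex^'n^'n \<Rightarrow> complex^'n^'n"
  assumes y: "y \<in> density_ri" and hG: "hermitian (F y)" and g: "\<gamma> > 0"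
  shows "\<exists>U q. unitary U \<and> qba_step F \<gamma> y = U ** rdiag q ** cadj U \<and> (\<forall>j. q j > 0) \<and> sum q UNIV = 1"
    and "\<exists>C. \<forall>x\<in>density. Re (trace (F y ** x)) + \<gamma> * bregman_negent x y
            = \<gamma> * rel_entropy x (qba_step F \<gamma> y) + C"
proof -
  have yd: "y \<in> density" using y ri_sub by blast
  have hy: "hermitian y" using yd density_herm by blast
  define H where "H = mlog y - (1 / \<gamma>) *\<^sub>R F y"
  have hH: "hermitian H" unfolding H_def mlog_def
    by (intro hermitian_diff hermitian_matfun hy hermitian_scaleR hG)
  obtain U h where U: "unitary U" and Hd: "H = U ** rdiag h ** cadj U"
    and mf: "\<And>g. matfun g H = U ** rdiag (g \<circ> h) ** cadj U"
    using matfun_herm[OF hH] by blast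
  define Z where "Z = (\<Sum>j\<in>UNIV. exp (h j))"
  have Zpos: "Z > 0" unfolding Z_def by (intro sum_pos) auto
  have E: "mexp H = U ** rdiag (exp \<circ> h) ** cadj U" by (simp add: mexp_def mf)
  have trE: "Re (trace (mexp H)) = Z" using trace_conj[OF U, of "exp \<circ> h"] E by (simp add: Z_def)
  define q where "q j = exp (h j) / Z" for j
  have xs: "qba_step F \<gamma> y = U ** rdiag q ** cadj U"
    unfolding qba_step_def Let_def H_def[symmetric] trE unfolding E conj_scaleR
  proof -
    have "(\<lambda>i. exp (h i) / Z) = q" by (auto simp: q_def)
    then show "U ** rdiag (\<lambda>i. 1 / Z * (exp \<circ> h) i) ** cadj U = U ** rdiag q ** cadj U" by simp
  qed
  have q0: "\<forall>j. q j > 0" using Zpos by (simp add: q_def)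
  have qs: "sum q UNIV = 1" using Zpos by (simp add: q_def Z_def sum_divide_distrib[symmetric])
  show "\<exists>U q. unitary U \<and> qba_step F \<gamma> y = U ** rdiag q ** cadj U \<and> (\<forall>j. q j > 0) \<and> sum q UNIV = 1"
    using U xs q0 qs by blast
  have "mlog (qba_step F \<gamma> y) = U ** rdiag (ln \<circ> q) ** cadj U"
    using matfun_eq[OF U xs] by (simp add: mlog_def)
  also have "rdiag (ln \<circ> q) = rdiag (\<lambda>j. h j - ln Z)"
    using Zpos by (simp add: q_def o_def ln_div)
  also have "U ** rdiag (\<lambda>j. h j - ln Z) ** cadj U = H - ln Z *\<^sub>R mat 1"
    by (simp add: conj_shift[OF U] Hd)
  finally have mly: "mlog y = mlog (qba_step F \<gamma> y) + ln Z *\<^sub>R mat 1 + (1 / \<gamma>) *\<^sub>R F y"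
    by (simp add: H_def)
  have "Re (trace (F y ** x)) + \<gamma> * bregman_negent x y
            = \<gamma> * rel_entropy x (qba_step F \<gamma> y) + (- \<gamma> * ln Z)" if x: "x \<in> density" for x
  proof -
    have trx: "Re (trace x) = 1" using x density_tr by blast
    have ty: "Re (trace y) = 1" using yd density_tr by blast
    have "Re (trace (x ** mlog y)) = Re (trace (x ** mlog (qba_step F \<gamma> y))) + ln Z * Re (trace x)
           + (1 / \<gamma>) * Re (trace (x ** F y))"
      unfolding mly by (simp add: matrix_add_ldistrib matrix_scalar_ac matrix_scaleR_left trace_add trace_scaleR)
    moreover have "trace (x ** F y) = trace (F y ** x)" by (rule trace_mul_sym)
    ultimately have "Re (trace (x ** mlog y)) = Re (trace (x ** mlog (qba_step F \<gamma> y))) + ln Z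
           + (1 / \<gamma>) * Re (trace (F y ** x))" using trx by simp
    then show ?thesis
      using g trx ty
      by (simp add: bregman_negent_def rel_entropy_def trace_sub algebra_simps)
  qed
  then show "\<exists>C. \<forall>x\<in>density. Re (trace (F y ** x)) + \<gamma> * bregman_negent x y
            = \<gamma> * rel_entropy x (qba_step F \<gamma> y) + C" by blast
qed

lemma matrix_add_rdistrib': "((A::'a::semiring_1^'n^'m) + B) ** C = A ** C + B ** C"
  by (simp add: vec_eq_iff matrix_matrix_mult_def distrib_right sum.distrib)

lemma qform_add: "qform (A + B) v = qform A v + qform B v"
  by (simp add: qform_cinner matrix_vector_mult_add_rdistrib cinner_add_right)

lemma qform_scaleR_mat: "qform (c *\<^sub>R A) v = of_real c * qform A v"
  by (simp add: qform_def matrix_vector_mult_def vec_scaleR_nth sum_distrib_left mult_ac) (simp add: scaleR_conv_of_real)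

lemma convex_ri: "convex (density_ri :: (complex^'n^'n) set)"
  unfolding convex_def
proof (intro ballI allI impI)
  fix x y :: "complex^'n^'n" and u v :: real
  assume x: "x \<in> density_ri" and y: "y \<in> density_ri" and u: "u \<ge> 0" and v: "v \<ge> 0" and uv: "u + v = 1"
  have hx: "hermitian x" "trace x = 1" and hy: "hermitian y" "trace y = 1"
    using x y by (auto simp: density_ri_def pd_def)
  have "hermitian (u *\<^sub>R x + v *\<^sub>R y)"
    using hx hy by (simp add: hermitian_def cadj_add cadj_scaleR)
  moreover have "0 < Re (qform (u *\<^sub>R x + v *\<^sub>R y) w)" if w: "w \<noteq> 0" for w
  proof -
    have px: "Re (qform x w) > 0" and py: "Re (qform y w) > 0"
      using x y w by (auto simp: density_ri_def pd_def)
    have "Re (qform (u *\<^sub>R x + v *\<^sub>R y) w) = u * Re (qform x w) + v * Re (qform y w)"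
      by (simp add: qform_add qform_scaleR_mat)
    moreover have "u > 0 \<or> v > 0" using u v uv by linarith
    ultimately show ?thesis using px py u v
      by (smt (verit) mult_nonneg_nonneg mult_pos_pos)
  qed
  moreover have "trace (u *\<^sub>R x + v *\<^sub>R y) = 1"
    using hx hy uv by (simp add: trace_add trace_scaleR) (metis of_real_1 of_real_add)
  ultimately show "u *\<^sub>R x + v *\<^sub>R y \<in> density_ri" by (simp add: density_ri_def pd_def)
qed

lemma conv_support:
  fixes g :: "complex^'n^'n \<Rightarrow> real"
  assumes S: "convex S"
    and sup: "\<And>z. z \<in> S \<Longrightarrow> \<exists>M. Re (trace (z ** M)) = g z \<and> (\<forall>w\<in>S. Re (trace (w ** M)) \<le> g w)"
  shows "convex_on S g"
  unfolding convex_on_def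
proof (intro conjI S ballI allI impI)
  fix x y u v assume x: "x \<in> S" and y: "y \<in> S" and u: "(u::real) \<ge> 0" and v: "(v::real) \<ge> 0" and uv: "u + v = 1"
  define z where "z = u *\<^sub>R x + v *\<^sub>R y"
  have "z \<in> S" using S x y u v uv by (simp add: z_def convex_def)
  then obtain M where M1: "Re (trace (z ** M)) = g z" and M2: "\<forall>w\<in>S. Re (trace (w ** M)) \<le> g w"
    using sup by blast
  have "Re (trace (z ** M)) = u * Re (trace (x ** M)) + v * Re (trace (y ** M))"
    by (simp add: z_def matrix_add_rdistrib' matrix_scaleR_left trace_add trace_scaleR)
  also have "\<dots> \<le> u * g x + v * g y"
    using M2 x y u v by (intro add_mono mult_left_mono) auto
  finally show "g (u *\<^sub>R x + v *\<^sub>R y) \<le> u * g x + v * g y" using M1 by (simp add: z_def)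
qed

lemma tr_lin: "Re (trace (w ** (c *\<^sub>R A - B))) = c * Re (trace (w ** A)) - Re (trace (w ** B))"
  by (simp add: matrix_diff_ldistrib matrix_scalar_ac matrix_scaleR_left trace_sub trace_scaleR)

lemma tr_lin2: "Re (trace (w ** (B - c *\<^sub>R A))) = Re (trace (w ** B)) - c * Re (trace (w ** A))"
  by (simp add: matrix_diff_ldistrib matrix_scalar_ac matrix_scaleR_left trace_sub trace_scaleR)

lemma hs_diff: "hs_inner x (A - B) = Re (trace (x ** A)) - Re (trace (x ** B))"
  by (simp add: hs_inner_def matrix_diff_ldistrib trace_sub)

lemma part3:
  fixes F :: "complex^'n^'n \<Rightarrow> complex^'n^'n" and \<gamma> :: real
  assumes F_ineq: "\<forall>x\<in>density_ri. \<forall>y\<in>density_ri. hs_inner x (F x - F y) \<le> \<gamma> * rel_entropy x y"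
  shows "convex_on density_ri (\<lambda>x. \<gamma> * negentropy x - hs_inner x (F x))"
proof (rule conv_support[OF convex_ri])
  fix z :: "complex^'n^'n" assume z: "z \<in> density_ri"
  have hz: "hermitian z" using z ri_sub density_herm by blast
  define M where "M = \<gamma> *\<^sub>R mlog z - F z"
  have "Re (trace (z ** M)) = \<gamma> * negentropy z - hs_inner z (F z)"
    using rel_entropy_self[OF hz] by (simp add: M_def tr_lin rel_entropy_def hs_inner_def)
  moreover have "\<forall>w\<in>density_ri. Re (trace (w ** M)) \<le> \<gamma> * negentropy w - hs_inner w (F w)"
  proof
    fix w :: "complex^'n^'n" assume w: "w \<in> density_ri"
    have "hs_inner w (F w - F z) \<le> \<gamma> * rel_entropy w z" using F_ineq w z by blast
    then show "Re (trace (w ** M)) \<le> \<gamma> * negentropy w - hs_inner w (F w)"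
      unfolding hs_diff by (simp add: M_def tr_lin hs_diff rel_entropy_def hs_inner_def algebra_simps)
  qed
  ultimately show "\<exists>M. Re (trace (z ** M)) = \<gamma> * negentropy z - hs_inner z (F z) \<and>
      (\<forall>w\<in>density_ri. Re (trace (w ** M)) \<le> \<gamma> * negentropy w - hs_inner w (F w))" by blast
qed

lemma part4:
  fixes F :: "complex^'n^'n \<Rightarrow> complex^'n^'n" and a :: real
  assumes F_ineq: "\<forall>x\<in>density_ri. \<forall>y\<in>density_ri. hs_inner x (F x - F y) \<ge> a * rel_entropy x y"
  shows "convex_on density_ri (\<lambda>x. hs_inner x (F x) - a * negentropy x)"
proof (rule conv_support[OF convex_ri])
  fix z :: "complex^'n^'n" assume z: "z \<in> density_ri"
  have hz: "hermitian z" using z ri_sub density_herm by blast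
  define M where "M = F z - a *\<^sub>R mlog z"
  have "Re (trace (z ** M)) = hs_inner z (F z) - a * negentropy z"
    using rel_entropy_self[OF hz] by (simp add: M_def tr_lin2 rel_entropy_def hs_inner_def)
  moreover have "\<forall>w\<in>density_ri. Re (trace (w ** M)) \<le> hs_inner w (F w) - a * negentropy w"
  proof
    fix w :: "complex^'n^'n" assume w: "w \<in> density_ri"
    have "hs_inner w (F w - F z) \<ge> a * rel_entropy w z" using F_ineq w z by blast
    then show "Re (trace (w ** M)) \<le> hs_inner w (F w) - a * negentropy w"
      unfolding hs_diff by (simp add: M_def tr_lin2 hs_diff rel_entropy_def hs_inner_def algebra_simps)
  qed
  ultimately show "\<exists>M. Re (trace (z ** M)) = hs_inner z (F z) - a * negentropy z \<and>
      (\<forall>w\<in>density_ri. Re (trace (w ** M)) \<le> hs_inner w (F w) - a * negentropy w)" by blast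
qed

lemma entry_bound: "norm ((A::complex^'n^'m) $ i $ k) \<le> norm A"
  by (meson Finite_Cartesian_Product.norm_nth_le order_trans)

lemma trace_bound:
  fixes A B :: "complex^'n^'n"
  shows "cmod (trace (A ** B)) \<le> real (CARD('n))^2 * norm A * norm B"
proof -
  have "cmod (trace (A ** B)) = cmod (\<Sum>i\<in>UNIV. \<Sum>k\<in>UNIV. A $ i $ k * B $ k $ i)"
    by (simp add: trace_def matrix_matrix_mult_def)
  also have "\<dots> \<le> (\<Sum>i\<in>UNIV. \<Sum>k\<in>UNIV. cmod (A $ i $ k * B $ k $ i))"
    by (rule order_trans[OF norm_sum sum_mono]) (rule norm_sum)
  also have "\<dots> \<le> (\<Sum>i\<in>(UNIV::'n set). \<Sum>k\<in>(UNIV::'n set). norm A * norm B)"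
    by (rule sum_mono, rule sum_mono) (simp add: norm_mult mult_mono entry_bound)
  also have "\<dots> = real (CARD('n))^2 * norm A * norm B" by (simp add: power2_eq_square)
  finally show ?thesis .
qed

lemma qform_bound:
  fixes B :: "complex^'n^'n"
  shows "cmod (qform B v) \<le> real (CARD('n))^2 * norm B * (norm v)^2"
proof -
  have "cmod (qform B v) = cmod (\<Sum>i\<in>UNIV. \<Sum>k\<in>UNIV. cnj (v $ i) * B $ i $ k * v $ k)"
    by (simp add: qform_def matrix_vector_mult_def sum_distrib_left mult_ac)
  also have "\<dots> \<le> (\<Sum>i\<in>UNIV. \<Sum>k\<in>UNIV. cmod (cnj (v $ i) * B $ i $ k * v $ k))"
    by (rule order_trans[OF norm_sum sum_mono]) (rule norm_sum)
  also have "\<dots> \<le> (\<Sum>i\<in>(UNIV::'n set). \<Sum>k\<in>(UNIV::'n set). norm v * norm B * norm v)"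
    by (rule sum_mono, rule sum_mono) (simp add: norm_mult mult_mono entry_bound Finite_Cartesian_Product.norm_nth_le)
  also have "\<dots> = real (CARD('n))^2 * norm B * (norm v)^2" by (simp add: power2_eq_square mult_ac)
  finally show ?thesis .
qed

lemma ri_open:
  fixes x :: "complex^'n^'n"
  assumes x: "x \<in> density_ri"
  shows "\<exists>e>0. \<forall>y\<in>density. dist y x < e \<longrightarrow> y \<in> density_ri"
proof -
  define K :: "(complex^'n) set" where "K = sphere 0 1"
  obtain i :: 'n where True by blast
  have "axis i (1::complex) $ i = 1" by (simp add: axis_def)
  then have "axis i (1::complex) \<noteq> 0" by auto
  then have "(1 / norm (axis i (1::complex))) *\<^sub>R axis i (1::complex) \<in> K" by (simp add: K_def)
  then have Kne: "K \<noteq> {}" by blast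
  obtain v0 where v0: "v0 \<in> K" and vmin: "\<And>v. v \<in> K \<Longrightarrow> Re (qform x v0) \<le> Re (qform x v)"
    using continuous_attains_inf[OF _ Kne cont_qform[of K x]] K_def by (metis compact_sphere)
  define m where "m = Re (qform x v0)"
  have "v0 \<noteq> 0" using v0 by (auto simp: K_def)
  then have mpos: "m > 0" using x by (simp add: m_def density_ri_def pd_def)
  have lowb: "Re (qform x v) \<ge> m * (norm v)^2" for v
  proof (cases "v = 0")
    case True then show ?thesis by (simp add: qform_def)
  next
    case False
    then have "(1 / norm v) *\<^sub>R v \<in> K" by (simp add: K_def)
    then have "m \<le> Re (qform x ((1 / norm v) *\<^sub>R v))" using vmin m_def by blast
    also have "\<dots> = Re (qform x v) / (norm v)^2" by (simp add: qform_scaleR power_divide)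
    finally show ?thesis using False by (simp add: le_divide_eq mult.commute)
  qed
  define C where "C = real (CARD('n))^2"
  have Cpos: "C > 0" by (simp add: C_def)
  define e where "e = m / C"
  have epos: "e > 0" using mpos Cpos by (simp add: e_def)
  have "y \<in> density_ri" if y: "y \<in> density" and d: "dist y x < e" for y
  proof -
    have hy: "hermitian y" and ty: "trace y = 1" using y by (auto simp: density_def psd_def)
    have "0 < Re (qform y v)" if v: "v \<noteq> 0" for v
    proof -
      have nv: "(norm v)^2 > 0" using v by simp
      have "y = x + (y - x)" by simp
      then have "qform y v = qform x v + qform (y - x) v" by (metis qform_add)
      moreover have "cmod (qform (y - x) v) \<le> C * norm (y - x) * (norm v)^2"
        using qform_bound by (simp add: C_def)
      moreover have "C * norm (y - x) < m"
        using d Cpos by (simp add: e_def dist_norm field_simps)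
      ultimately have "Re (qform y v) \<ge> m * (norm v)^2 - C * norm (y - x) * (norm v)^2"
        using lowb[of v] abs_Re_le_cmod[of "qform (y - x) v"] by simp
      moreover have "C * norm (y - x) * (norm v)^2 < m * (norm v)^2"
        using \<open>C * norm (y - x) < m\<close> nv by simp
      ultimately show ?thesis by simp
    qed
    then show ?thesis using hy ty by (simp add: density_ri_def pd_def)
  qed
  then show ?thesis using epos by blast
qed

lemma hs_linear: "bounded_linear (\<lambda>h. hs_inner (M::complex^'n^'n) h)"
proof -
  have "linear (\<lambda>h. hs_inner M h)"
    by (rule linearI) (simp_all add: hs_inner_def matrix_add_ldistrib trace_add matrix_scalar_ac matrix_scaleR_left trace_scaleR)
  then show ?thesis by (simp add: linear_conv_bounded_linear)
qed

lemma part2: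
  fixes F :: "complex^'n^'n \<Rightarrow> complex^'n^'n"
  assumes F_cont: "continuous_on density F"
    and F_ineq: "\<forall>x\<in>density_ri. \<forall>y\<in>density_ri. 0 \<le> hs_inner x (F x - F y)"
    and x: "x \<in> density_ri"
  shows "((\<lambda>x. hs_inner x (F x)) has_derivative (\<lambda>h. hs_inner (F x) h)) (at x within density)"
  unfolding has_derivative_within
proof (intro conjI hs_linear)
  define C where "C = real (CARD('n))^2"
  have xd: "x \<in> density" using x ri_sub by blast
  obtain e where e: "e > 0" and eri: "\<forall>y\<in>density. dist y x < e \<longrightarrow> y \<in> density_ri"
    using ri_open[OF x] by blast
  have ev: "eventually (\<lambda>y. norm ((1 / norm (y - x)) *\<^sub>R (hs_inner y (F y) - (hs_inner x (F x) + hs_inner (F x) (y - x))))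
       \<le> C * norm (F y - F x)) (at x within density)"
    unfolding eventually_at
  proof (intro exI[of _ e] conjI e ballI impI)
    fix y assume yd: "y \<in> density" and yx: "y \<noteq> x \<and> dist y x < e"
    then have y: "y \<in> density_ri" using eri by blast
    define D where "D = hs_inner y (F y - F x)"
    have Deq: "hs_inner y (F y) - (hs_inner x (F x) + hs_inner (F x) (y - x)) = D"
    proof -
      have "hs_inner (F x) (y - x) = Re (trace (y ** F x)) - Re (trace (x ** F x))"
        by (simp add: hs_inner_def matrix_diff_ldistrib trace_sub trace_mul_sym[of "F x"])
      then show ?thesis by (simp add: D_def hs_diff) (simp add: hs_inner_def)
    qed
    have D0: "0 \<le> D" using F_ineq y x by (simp add: D_def)
    have "D = hs_inner x (F y - F x) + hs_inner (y - x) (F y - F x)"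
      by (simp add: D_def hs_inner_def matrix_diff_rdistrib trace_sub)
    moreover have "hs_inner x (F y - F x) \<le> 0"
    proof -
      have "0 \<le> hs_inner x (F x - F y)" using F_ineq y x by blast
      moreover have "hs_inner x (F y - F x) = - hs_inner x (F x - F y)" by (simp add: hs_diff)
      ultimately show ?thesis by simp
    qed
    moreover have "\<bar>hs_inner (y - x) (F y - F x)\<bar> \<le> C * norm (y - x) * norm (F y - F x)"
      unfolding hs_inner_def C_def using trace_bound abs_Re_le_cmod order_trans by blast
    ultimately have "\<bar>D\<bar> \<le> C * norm (y - x) * norm (F y - F x)" using D0 by linarith
    moreover have ny: "norm (y - x) > 0" using yx by simp
    ultimately show "norm ((1 / norm (y - x)) *\<^sub>R (hs_inner y (F y) - (hs_inner x (F x) + hs_inner (F x) (y - x))))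
       \<le> C * norm (F y - F x)"
      unfolding Deq by (simp add: divide_le_eq mult_ac)
  qed
  have "(F \<longlongrightarrow> F x) (at x within density)" using F_cont xd by (simp add: continuous_on_def)
  then have "((\<lambda>y. F y - F x) \<longlongrightarrow> 0) (at x within density)" by (simp add: LIM_zero)
  then have "((\<lambda>y. C * norm (F y - F x)) \<longlongrightarrow> 0) (at x within density)"
    by (intro tendsto_mult_right_zero tendsto_norm_zero)
  then show "((\<lambda>y. (1 / norm (y - x)) *\<^sub>R (hs_inner y (F y) - (hs_inner x (F x) + hs_inner (F x) (y - x))))
      \<longlongrightarrow> 0) (at x within density)"
    by (rule Lim_null_comparison[OF ev])
qed

theorem mainTheorem4:
  fixes F :: "complex^'n^'n \<Rightarrow> complex^'n^'n" and \<gamma> :: real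
    and x0 :: "complex^'n^'n"
  assumes gamma_pos: "\<gamma> > 0"
    and F_herm: "\<forall>x\<in>density. hermitian (F x)"
    and F_cont: "continuous_on density F"
    and F_ineq: "\<forall>x\<in>density_ri. \<forall>y\<in>density_ri.
                   0 \<le> hs_inner x (F x - F y) \<and> hs_inner x (F x - F y) \<le> \<gamma> * rel_entropy x y"
    and x0_ri: "x0 \<in> density_ri"
  defines "f \<equiv> (\<lambda>x. hs_inner x (F x))"
  shows
    "(\<forall>k. qba_iter F \<gamma> x0 (Suc k) \<in> density
        \<and> (\<forall>x\<in>density.
              hs_inner (F (qba_iter F \<gamma> x0 k)) (qba_iter F \<gamma> x0 (Suc k))
                + \<gamma> * bregman_negent (qba_iter F \<gamma> x0 (Suc k)) (qba_iter F \<gamma> x0 k)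
              \<le> hs_inner (F (qba_iter F \<gamma> x0 k)) x
                + \<gamma> * bregman_negent x (qba_iter F \<gamma> x0 k))
        \<and> (\<forall>x\<in>density.
              hs_inner (F (qba_iter F \<gamma> x0 k)) x
                + \<gamma> * bregman_negent x (qba_iter F \<gamma> x0 k)
              \<le> hs_inner (F (qba_iter F \<gamma> x0 k)) (qba_iter F \<gamma> x0 (Suc k))
                + \<gamma> * bregman_negent (qba_iter F \<gamma> x0 (Suc k)) (qba_iter F \<gamma> x0 k)
              \<longrightarrow> x = qba_iter F \<gamma> x0 (Suc k)))
     \<and> (\<forall>x\<in>density_ri. f x = hs_inner x (F x)
          \<and> (f has_derivative (\<lambda>h. hs_inner (F x) h)) (at x within density))
     \<and> convex_on density_ri (\<lambda>x. \<gamma> * negentropy x - f x)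
     \<and> (\<forall>a>0. (\<forall>x\<in>density_ri. \<forall>y\<in>density_ri. hs_inner x (F x - F y) \<ge> a * rel_entropy x y)
          \<longrightarrow> convex_on density_ri (\<lambda>x. f x - a * negentropy x))"
proof -
  let ?it = "qba_iter F \<gamma> x0"
  have ri_all: "?it k \<in> density_ri" for k
  proof (induction k)
    case 0 then show ?case using x0_ri by simp
  next
    case (Suc k)
    have "hermitian (F (?it k))" using F_herm Suc ri_sub by blast
    from gibbs(1)[where y = "?it k" and F = F, OF Suc this gamma_pos] obtain U q where
      "unitary U" "qba_step F \<gamma> (?it k) = U ** rdiag q ** cadj U" "\<forall>j. q j > 0" "sum q UNIV = 1"
      by blast
    then show ?case using conj_ri by simp
  qed
  have part1: "?it (Suc k) \<in> density
        \<and> (\<forall>x\<in>density.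
              hs_inner (F (?it k)) (?it (Suc k)) + \<gamma> * bregman_negent (?it (Suc k)) (?it k)
              \<le> hs_inner (F (?it k)) x + \<gamma> * bregman_negent x (?it k))
        \<and> (\<forall>x\<in>density.
              hs_inner (F (?it k)) x + \<gamma> * bregman_negent x (?it k)
              \<le> hs_inner (F (?it k)) (?it (Suc k)) + \<gamma> * bregman_negent (?it (Suc k)) (?it k)
              \<longrightarrow> x = ?it (Suc k))" for k
  proof -
    define y where "y = ?it k"
    define xs where "xs = ?it (Suc k)"
    have y: "y \<in> density_ri" using ri_all by (simp add: y_def)
    have hF: "hermitian (F y)" using F_herm y ri_sub by blast
    have xs_eq: "xs = qba_step F \<gamma> y" by (simp add: xs_def y_def)
    from gibbs(1)[where y = y and F = F, OF y hF gamma_pos] obtain U q where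
      U: "unitary U" and xsd: "xs = U ** rdiag q ** cadj U" and q0: "\<forall>j. q j > 0" and qs: "sum q UNIV = 1"
      unfolding xs_eq[symmetric] by blast
    from gibbs(2)[where y = y and F = F, OF y hF gamma_pos] obtain C where
      C: "\<forall>x\<in>density. hs_inner (F y) x + \<gamma> * bregman_negent x y = \<gamma> * rel_entropy x xs + C"
      unfolding xs_eq[symmetric] hs_inner_def by blast
    have xsd2: "xs \<in> density" using xs_def ri_all ri_sub by blast
    have S0: "rel_entropy xs xs = 0" using xsd by (simp add: rel_entropy_self hermitian_conj)
    have objxs: "hs_inner (F y) xs + \<gamma> * bregman_negent xs y = C" using C xsd2 S0 by simp
    have Sge: "rel_entropy x xs \<ge> 0" and Seq: "rel_entropy x xs = 0 \<Longrightarrow> x = xs" if x: "x \<in> density" for x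
    proof -
      obtain V p where "unitary V" "x = V ** rdiag p ** cadj V" "\<forall>i. p i \<ge> 0" "sum p UNIV = 1"
        using density_decomp[OF x] by blast
      from klein[OF this U xsd q0 qs]
      show "rel_entropy x xs \<ge> 0" and "rel_entropy x xs = 0 \<Longrightarrow> x = xs" by auto
    qed
    have "\<forall>x\<in>density. hs_inner (F y) xs + \<gamma> * bregman_negent xs y \<le> hs_inner (F y) x + \<gamma> * bregman_negent x y"
      using C objxs Sge gamma_pos by (simp add: mult_nonneg_nonneg less_imp_le)
    moreover have "\<forall>x\<in>density. hs_inner (F y) x + \<gamma> * bregman_negent x y \<le> hs_inner (F y) xs + \<gamma> * bregman_negent xs y
        \<longrightarrow> x = xs"
    proof (intro ballI impI)
      fix x assume x: "x \<in> density"
        and le: "hs_inner (F y) x + \<gamma> * bregman_negent x y \<le> hs_inner (F y) xs + \<gamma> * bregman_negent xs y"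
      then have "\<gamma> * rel_entropy x xs \<le> 0" using C objxs by simp
      then have "rel_entropy x xs \<le> 0" using gamma_pos by (simp add: mult_le_0_iff)
      then have "rel_entropy x xs = 0" using Sge[OF x] by simp
      then show "x = xs" using Seq[OF x] by simp
    qed
    ultimately show ?thesis using xsd2 by (simp add: xs_def y_def)
  qed
  have ineq0: "\<forall>x\<in>density_ri. \<forall>y\<in>density_ri. 0 \<le> hs_inner x (F x - F y)" using F_ineq by blast
  have ineq1: "\<forall>x\<in>density_ri. \<forall>y\<in>density_ri. hs_inner x (F x - F y) \<le> \<gamma> * rel_entropy x y"
    using F_ineq by blast
  have part2': "\<forall>x\<in>density_ri. f x = hs_inner x (F x)
          \<and> (f has_derivative (\<lambda>h. hs_inner (F x) h)) (at x within density)"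
    using part2[OF F_cont ineq0] by (simp add: f_def)
  have part3': "convex_on density_ri (\<lambda>x. \<gamma> * negentropy x - f x)"
    using part3[OF ineq1] by (simp add: f_def)
  have part4': "\<forall>a>0. (\<forall>x\<in>density_ri. \<forall>y\<in>density_ri. hs_inner x (F x - F y) \<ge> a * rel_entropy x y)
          \<longrightarrow> convex_on density_ri (\<lambda>x. f x - a * negentropy x)"
    unfolding f_def using part4[where F = F] by blast
  show ?thesis using part1 part2' part3' part4' by blast
qed

end
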